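(* Assume (A2) and (A4). There is a constant $C>0$ such that for $n$ large enough and every $m\le M_n$ (equivalently, every index set $\widehat J_m$ with $|\widehat J_m|=m\le M_n$), \[\big|\|(I-\Pi_m)f^*\|_n^2-\|(I-\Pi_m)f^*\|_{L^2}^2\big|\le C\,D_n\cdot\begin{cases}(s+m)\|(I-\Pi_m)f^*\|_{L^2}^2, & \text{under (A2)(i)},\\ \big(\|(I-\Pi_m)f^*\|_{L^2}^2\big)^{\frac{2\gamma-2}{2\gamma-1}}, & \text{under (A2)(ii)},\end{cases}\] where $D_n=\sup_{j,k\le p}|\langle g_j,g_k\rangle_n-\langle g_j,g_k\rangle_{L^2}|$.
   Context: Model: for each $n$, $Y_i=f^*(X_i)+\varepsilon_i$, $f^*(x)=\sum_{j=1}^p\beta^*_jx^{(j)}$, rows $X_i\in\mathbb R^p$ i.i.d., $p=p^{(n)}\to\infty$, $\log(p)/n\to0$. $g_j(x)=x^{(j)}$; $\langle f,g\rangle_n=n^{-1}\sum_if(X_i)g(X_i)$ and $\|\cdot\|_n$; $\langle f,g\rangle_{L^2}=\mathbb Ef(X_1)g(X_1)$ and $\|\cdot\|_{L^2}$. For $J\subset\{1,\dots,p\}$, $\Pi_J$ is the $\langle\cdot,\cdot\rangle_{L^2}$-orthogonal projection onto $\mathrm{span}\{g_j:j\in J\}$; $\Pi_m=\Pi_{\widehat J_m}$ where $\widehat J_m$ is the (arbitrary) set of $m$ indices selected by orthogonal matching pursuit. (A2): either (i) $\beta^*$ is $s$-sparse: $|\{j:\beta^*_j\ne0\}|\le s$,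 $s\|\beta^*\|_1^2=o(n/\log p)$, $\|f^*\|_{L^2}^2\le C_{f^*}$, $\min_{j:\beta^*_j\ne0}|\beta^*_j|\ge\underline\beta>0$; or (ii) $\beta^*$ is $\gamma$-sparse, $\gamma\in[1,\infty)$: $\|\beta^*\|_2\le C_{\ell^2}$ and $\sum_{j\in J}|\beta^*_j|\le C_\gamma(\sum_{j\in J}|\beta^*_j|^2)^{(\gamma-1)/(2\gamma-1)}$ for all $J$. (A4): $\Gamma=\mathrm{Cov}(X_1)$ with $\lambda_{\min}(\Gamma)\ge c_\lambda>0$ and $\sup_{|J|\le M_n,k\notin J}\|\Gamma_J^{-1}v_k\|_1<C_{\mathrm{Cov}}$, where $\Gamma_J=(\Gamma_{jk})_{j,k\in J}$, $v_k=(\mathrm{Cov}(X_1^{(k)},X_1^{(j)}))_{j\in J}$, $M_n=\sqrt{n/((\overline\sigma^2+\rho^4)\log p)}$ for given parameters $\overline\sigma^2,\rho^2>0$. All constants are fixed, independent of $n$. *)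

theory Defs
  imports "HOL-Probability.Probability"
begin

text \<open>Design vectors are points x :: nat \<Rightarrow> real; only the coordinates 1..p matter.
  The distribution of X_1 (for sample size n) is a probability measure on nat \<Rightarrow> real.\<close>

definition coord :: "nat \<Rightarrow> (nat \<Rightarrow> real) \<Rightarrow> real" where
  "coord j = (\<lambda>x. x j)"

definition emp_inner :: "nat \<Rightarrow> (nat \<Rightarrow> (nat \<Rightarrow> real)) \<Rightarrow> ((nat \<Rightarrow> real) \<Rightarrow> real)
    \<Rightarrow> ((nat \<Rightarrow> real) \<Rightarrow> real) \<Rightarrow> real" where
  "emp_inner n X f g = (\<Sum>i=1..n. f (X i) * g (X i)) / real n"

definition L2_inner :: "(nat \<Rightarrow> real) measure \<Rightarrow> ((nat \<Rightarrow> real) \<Rightarrow> real)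
    \<Rightarrow> ((nat \<Rightarrow> real) \<Rightarrow> real) \<Rightarrow> real" where
  "L2_inner P f g = (\<integral>x. f x * g x \<partial>P)"

definition lin_span :: "nat set \<Rightarrow> ((nat \<Rightarrow> real) \<Rightarrow> real) set" where
  "lin_span J = {h. \<exists>c :: nat \<Rightarrow> real. h = (\<lambda>x. \<Sum>j\<in>J. c j * x j)}"

definition L2_proj :: "(nat \<Rightarrow> real) measure \<Rightarrow> nat set \<Rightarrow> ((nat \<Rightarrow> real) \<Rightarrow> real)
    \<Rightarrow> ((nat \<Rightarrow> real) \<Rightarrow> real)" where
  "L2_proj P J f = (SOME h. h \<in> lin_span J \<and>
      (\<forall>j\<in>J. L2_inner P (\<lambda>x. f x - h x) (coord j) = 0))"

definition cov :: "(nat \<Rightarrow> real) measure \<Rightarrow> nat \<Rightarrow> nat \<Rightarrow> real" where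
  "cov P j k = (\<integral>x. x j * x k \<partial>P) - (\<integral>x. x j \<partial>P) * (\<integral>x. x k \<partial>P)"

text \<open>Gamma_J^{-1} v_k, as a vector supported on J: the (unique, when Gamma_J is
  invertible) solution w of Gamma_J w = v_k.\<close>
definition sub_inv_apply :: "(nat \<Rightarrow> nat \<Rightarrow> real) \<Rightarrow> nat set \<Rightarrow> nat \<Rightarrow> (nat \<Rightarrow> real)" where
  "sub_inv_apply G J k = (THE w. (\<forall>j. j \<notin> J \<longrightarrow> w j = 0) \<and>
      (\<forall>i\<in>J. (\<Sum>j\<in>J. G i j * w j) = G i k))"

definition D_n :: "nat \<Rightarrow> nat \<Rightarrow> (nat \<Rightarrow> (nat \<Rightarrow> real)) \<Rightarrow> (nat \<Rightarrow> real) measure \<Rightarrow> real" where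
  "D_n n p X P = Max ((\<lambda>(j,k). \<bar>emp_inner n X (coord j) (coord k) - L2_inner P (coord j) (coord k)\<bar>)
      ` ({1..p} \<times> {1..p}))"

text \<open>M_n = sqrt(n / ((sigma^2 + rho^4) log p)), with sigma2 = overline sigma^2, rho2 = rho^2.\<close>
definition M_n :: "nat \<Rightarrow> nat \<Rightarrow> real \<Rightarrow> real \<Rightarrow> real" where
  "M_n n p sigma2 rho2 = sqrt (real n / ((sigma2 + rho2 ^ 2) * ln (real p)))"

definition lin_fun :: "nat \<Rightarrow> (nat \<Rightarrow> real) \<Rightarrow> (nat \<Rightarrow> real) \<Rightarrow> real" where
  "lin_fun p b = (\<lambda>x. \<Sum>j=1..p. b j * x j)"

definition A2_i :: "(nat \<Rightarrow> (nat \<Rightarrow> real) measure) \<Rightarrow> (nat \<Rightarrow> nat) \<Rightarrow> (nat \<Rightarrow> nat \<Rightarrow> real)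
    \<Rightarrow> (nat \<Rightarrow> nat) \<Rightarrow> real \<Rightarrow> real \<Rightarrow> bool" where
  "A2_i P p \<beta> s Cf \<beta>low \<longleftrightarrow>
     (\<forall>n. card {j\<in>{1..p n}. \<beta> n j \<noteq> 0} \<le> s n) \<and>
     ((\<lambda>n. real (s n) * (\<Sum>j=1..p n. \<bar>\<beta> n j\<bar>)\<^sup>2 / (real n / ln (real (p n)))) \<longlonglongrightarrow> 0) \<and>
     (\<forall>n. L2_inner (P n) (lin_fun (p n) (\<beta> n)) (lin_fun (p n) (\<beta> n)) \<le> Cf) \<and>
     \<beta>low > 0 \<and> (\<forall>n. \<forall>j\<in>{1..p n}. \<beta> n j \<noteq> 0 \<longrightarrow> \<bar>\<beta> n j\<bar> \<ge> \<beta>low)"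

definition A2_ii :: "(nat \<Rightarrow> nat) \<Rightarrow> (nat \<Rightarrow> nat \<Rightarrow> real) \<Rightarrow> real \<Rightarrow> real \<Rightarrow> real \<Rightarrow> bool" where
  "A2_ii p \<beta> \<gamma> Cl2 C\<gamma> \<longleftrightarrow> \<gamma> \<ge> 1 \<and>
     (\<forall>n. sqrt (\<Sum>j=1..p n. (\<beta> n j)\<^sup>2) \<le> Cl2) \<and>
     (\<forall>n. \<forall>J. J \<subseteq> {1..p n} \<longrightarrow>
        (\<Sum>j\<in>J. \<bar>\<beta> n j\<bar>) \<le> C\<gamma> * (\<Sum>j\<in>J. (\<beta> n j)\<^sup>2) powr ((\<gamma> - 1) / (2 * \<gamma> - 1)))"

definition A4 :: "(nat \<Rightarrow> (nat \<Rightarrow> real) measure) \<Rightarrow> (nat \<Rightarrow> nat) \<Rightarrow> real \<Rightarrow> real \<Rightarrow> real \<Rightarrow> real \<Rightarrow> bool" where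
  "A4 P p clam CCov sigma2 rho2 \<longleftrightarrow> clam > 0 \<and>
     (\<forall>n v. (\<Sum>i=1..p n. \<Sum>j=1..p n. v i * cov (P n) i j * v j) \<ge> clam * (\<Sum>i=1..p n. (v i)\<^sup>2)) \<and>
     (\<forall>n J. J \<subseteq> {1..p n} \<and> real (card J) \<le> M_n n (p n) sigma2 rho2 \<longrightarrow>
        (\<forall>k\<in>{1..p n} - J. (\<Sum>j\<in>J. \<bar>sub_inv_apply (cov (P n)) J k j\<bar>) < CCov))"

end

theory Submission
  imports Defs
begin

lemma int_prod:
  assumes meas: "\<And>j. (\<lambda>x. x j) \<in> borel_measurable P"
    and sq: "\<And>j. integrable P (\<lambda>x. (x j)\<^sup>2)"
  shows "integrable P (\<lambda>x. x (j::nat) * (x k::real))"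
proof (rule Bochner_Integration.integrable_bound[where f="\<lambda>x. (x j)\<^sup>2 + (x k)\<^sup>2"])
  show "integrable P (\<lambda>x. (x j)\<^sup>2 + (x k)\<^sup>2)" using sq by auto
  show "(\<lambda>x. x j * x k) \<in> borel_measurable P" using meas by auto
  show "AE x in P. norm (x j * x k) \<le> norm ((x j)\<^sup>2 + (x k)\<^sup>2)"
  proof (rule AE_I2)
    fix x :: "nat \<Rightarrow> real"
    have "0 \<le> (\<bar>x j\<bar> - \<bar>x k\<bar>)\<^sup>2" by simp
    then have "2 * (\<bar>x j\<bar> * \<bar>x k\<bar>) \<le> \<bar>x j\<bar>\<^sup>2 + \<bar>x k\<bar>\<^sup>2"
      by (simp add: power2_diff)
    moreover have "0 \<le> \<bar>x j\<bar> * \<bar>x k\<bar>" by simp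
    ultimately have "\<bar>x j * x k\<bar> \<le> (x j)\<^sup>2 + (x k)\<^sup>2"
      by (simp only: abs_mult power2_abs)
    then show "norm (x j * x k) \<le> norm ((x j)\<^sup>2 + (x k)\<^sup>2)" by simp
  qed
qed

lemma L2_bilin:
  assumes meas: "\<And>j. (\<lambda>x. x j) \<in> borel_measurable P"
    and sq: "\<And>j. integrable P (\<lambda>x. (x j)\<^sup>2)"
  shows "L2_inner P (\<lambda>x. \<Sum>j\<in>S. a j * x j) (\<lambda>x. \<Sum>k\<in>T. d k * x k)
       = (\<Sum>j\<in>S. \<Sum>k\<in>T. a j * d k * L2_inner P (coord j) (coord k))"
proof -
  have e: "(\<lambda>x. (\<Sum>j\<in>S. a j * x j) * (\<Sum>k\<in>T. d k * x k)) = (\<lambda>x. \<Sum>j\<in>S. \<Sum>k\<in>T. a j * d k * (x j * x k))"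
    by (simp add: sum_product mult_ac)
  have ip: "\<And>j k. integrable P (\<lambda>x. x j * x k)" using int_prod[OF meas sq] by blast
  show ?thesis unfolding L2_inner_def e coord_def
    by (simp add: Bochner_Integration.integral_sum ip)
qed

lemma L2_lin_coord:
  assumes meas: "\<And>j. (\<lambda>x. x j) \<in> borel_measurable P"
    and sq: "\<And>j. integrable P (\<lambda>x. (x j)\<^sup>2)"
  shows "L2_inner P (\<lambda>x. \<Sum>j\<in>S. a j * x j) (coord i)
       = (\<Sum>j\<in>S. a j * L2_inner P (coord j) (coord i))"
proof -
  have "coord i = (\<lambda>x. \<Sum>k\<in>{i}. 1 * x k)" by (simp add: coord_def)
  then show ?thesis using L2_bilin[OF meas sq, where S=S and a=a and T="{i}" and d="\<lambda>_. 1"] by simp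
qed

lemma emp_bilin:
  shows "emp_inner n X (\<lambda>x. \<Sum>j\<in>S. a j * x j) (\<lambda>x. \<Sum>k\<in>T. d k * x k)
       = (\<Sum>j\<in>S. \<Sum>k\<in>T. a j * d k * emp_inner n X (coord j) (coord k))"
proof -
  have "(\<Sum>i=1..n. (\<Sum>j\<in>S. a j * X i j) * (\<Sum>k\<in>T. d k * X i k))
      = (\<Sum>i=1..n. \<Sum>j\<in>S. \<Sum>k\<in>T. a j * d k * (X i j * X i k))"
    by (simp add: sum_product mult_ac)
  also have "\<dots> = (\<Sum>j\<in>S. \<Sum>k\<in>T. a j * d k * (\<Sum>i=1..n. X i j * X i k))"
    by (subst sum.swap, rule sum.cong, simp, subst sum.swap, simp add: sum_distrib_left)
  finally show ?thesis unfolding emp_inner_def coord_def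
    by (simp only: sum_divide_distrib[where A=S] sum_divide_distrib[where A=T] times_divide_eq_right)
qed

lemma solve_exists:
  fixes G :: "nat \<Rightarrow> nat \<Rightarrow> real"
  assumes "finite J" "\<forall>i\<in>J. \<forall>j\<in>J. G i j = G j i" "c > 0"
    "\<forall>v. (\<Sum>i\<in>J. \<Sum>j\<in>J. v i * G i j * v j) \<ge> c * (\<Sum>i\<in>J. (v i)\<^sup>2)"
  shows "\<exists>w. (\<forall>j. j \<notin> J \<longrightarrow> w j = 0) \<and> (\<forall>i\<in>J. (\<Sum>j\<in>J. G i j * w j) = y i)"
  using assms
proof (induction J arbitrary: G y rule: finite_induct)
  case empty
  then show ?case by (intro exI[of _ "\<lambda>_. 0"]) simp
next
  case (insert a J)
  note sym = insert.prems(1) and pd = insert.prems(3)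
  have Gaa: "G a a \<ge> c"
  proof -
    define e where "e = (\<lambda>i. if i = a then 1 else 0::real)"
    have e0: "\<And>j. j \<in> J \<Longrightarrow> e j = 0" using insert.hyps unfolding e_def by auto
    have ea: "e a = 1" unfolding e_def by simp
    have s0: "\<And>f. (\<Sum>j\<in>J. e j * f j) = 0" using e0 by simp
    have s1: "\<And>f. (\<Sum>j\<in>J. f j * e j) = 0" using e0 by simp
    have s2: "(\<Sum>j\<in>J. (e j)\<^sup>2) = 0" using e0 by simp
    have "c * (\<Sum>i\<in>insert a J. (e i)\<^sup>2) \<le> (\<Sum>i\<in>insert a J. \<Sum>j\<in>insert a J. e i * G i j * e j)"
      using pd[rule_format, of e] .
    then show ?thesis using insert.hyps ea by (simp add: e0)
  qed
  then have Gpos: "G a a > 0" using insert.prems(2) by linarith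
  define G' where "G' i j = G i j - G i a * G a j / G a a" for i j
  define y' where "y' i = y i - G i a * y a / G a a" for i
  have sym': "\<forall>i\<in>J. \<forall>j\<in>J. G' i j = G' j i"
  proof (intro ballI)
    fix i j assume i: "i \<in> J" and j: "j \<in> J"
    have h: "G i j = G j i" "G i a = G a i" "G a j = G j a" using sym i j by blast+
    show "G' i j = G' j i" unfolding G'_def h by (simp add: mult.commute)
  qed
  have pd': "\<forall>v. (\<Sum>i\<in>J. \<Sum>j\<in>J. v i * G' i j * v j) \<ge> c * (\<Sum>i\<in>J. (v i)\<^sup>2)"
  proof
    fix v :: "nat \<Rightarrow> real"
    define S where "S = (\<Sum>j\<in>J. G a j * v j)"
    define Q where "Q = (\<Sum>i\<in>J. \<Sum>j\<in>J. v i * G i j * v j)"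
    define t where "t = - S / G a a"
    define u where "u = v(a := t)"
    have uJ: "\<And>i. i \<in> J \<Longrightarrow> u i = v i" using insert.hyps unfolding u_def by auto
    have S2: "(\<Sum>i\<in>J. v i * G i a) = S" unfolding S_def
    proof (intro sum.cong refl)
      fix i assume "i \<in> J"
      then have "G i a = G a i" using sym by blast
      then show "v i * G i a = G a i * v i" by simp
    qed
    have "(\<Sum>i\<in>insert a J. \<Sum>j\<in>insert a J. u i * G i j * u j)
        = t * G a a * t + (\<Sum>j\<in>J. t * G a j * v j) + (\<Sum>i\<in>J. v i * G i a * t + (\<Sum>j\<in>J. v i * G i j * v j))"
      using insert.hyps uJ by (simp add: u_def sum.distrib)
    also have "\<dots> = t * G a a * t + 2 * t * S + Q"
    proof -
      have "(\<Sum>j\<in>J. t * G a j * v j) = t * S" unfolding S_def by (simp add: sum_distrib_left mult_ac)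
      moreover have "(\<Sum>i\<in>J. v i * G i a * t) = t * S"
        using S2 sum_distrib_right[of "\<lambda>i. v i * G i a" J t, symmetric] by simp
      ultimately show ?thesis unfolding Q_def by (simp add: sum.distrib)
    qed
    also have "\<dots> = Q - S\<^sup>2 / G a a" unfolding t_def using Gpos
      by (simp add: field_simps power2_eq_square)
    finally have e1: "(\<Sum>i\<in>insert a J. \<Sum>j\<in>insert a J. u i * G i j * u j) = Q - S\<^sup>2 / G a a" .
    have e2: "(\<Sum>i\<in>J. \<Sum>j\<in>J. v i * G' i j * v j) = Q - S\<^sup>2 / G a a"
    proof -
      have "(\<Sum>i\<in>J. \<Sum>j\<in>J. v i * G' i j * v j)
          = Q - (\<Sum>i\<in>J. \<Sum>j\<in>J. (v i * G i a) * (G a j * v j) / G a a)"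
        unfolding G'_def Q_def by (simp add: algebra_simps sum_subtractf)
      also have "(\<Sum>i\<in>J. \<Sum>j\<in>J. (v i * G i a) * (G a j * v j) / G a a) = S * S / G a a"
        using S2 unfolding S_def
        by (simp add: sum_divide_distrib[symmetric] sum_product[symmetric])
      finally show ?thesis by (simp add: power2_eq_square)
    qed
    have h1: "c * (\<Sum>i\<in>insert a J. (u i)\<^sup>2) \<le> (\<Sum>i\<in>insert a J. \<Sum>j\<in>insert a J. u i * G i j * u j)"
      using pd[rule_format, of u] .
    have h2: "(\<Sum>i\<in>insert a J. (u i)\<^sup>2) = t\<^sup>2 + (\<Sum>i\<in>J. (v i)\<^sup>2)"
      using insert.hyps uJ by (simp add: u_def)
    have h3: "c * (\<Sum>i\<in>J. (v i)\<^sup>2) \<le> c * (t\<^sup>2 + (\<Sum>i\<in>J. (v i)\<^sup>2))"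
      using insert.prems(2) by simp
    have A: "c * (t\<^sup>2 + (\<Sum>i\<in>J. (v i)\<^sup>2)) \<le> Q - S\<^sup>2 / G a a"
      using h1 unfolding h2 e1 .
    show "c * (\<Sum>i\<in>J. (v i)\<^sup>2) \<le> (\<Sum>i\<in>J. \<Sum>j\<in>J. v i * G' i j * v j)"
      unfolding e2 using A h3 by linarith
  qed
  obtain w' where w'0: "\<forall>j. j \<notin> J \<longrightarrow> w' j = 0" and w'eq: "\<forall>i\<in>J. (\<Sum>j\<in>J. G' i j * w' j) = y' i"
    using insert.IH[OF sym' insert.prems(2) pd'] by blast
  define wa where "wa = (y a - (\<Sum>j\<in>J. G a j * w' j)) / G a a"
  define w where "w = w'(a := wa)"
  have wJ: "\<And>i. i \<in> J \<Longrightarrow> w i = w' i" using insert.hyps unfolding w_def by auto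
  show ?case
  proof (intro exI[of _ w] conjI allI impI ballI)
    fix j assume "j \<notin> insert a J" then show "w j = 0" using w'0 by (simp add: w_def)
  next
    fix i assume i: "i \<in> insert a J"
    have sJ: "(\<Sum>j\<in>J. G i j * w j) = (\<Sum>j\<in>J. G i j * w' j)" for i
      using wJ by (intro sum.cong) auto
    have "(\<Sum>j\<in>insert a J. G i j * w j) = G i a * wa + (\<Sum>j\<in>J. G i j * w' j)"
      using insert.hyps sJ by (simp add: w_def)
    also have "\<dots> = y i"
    proof (cases "i = a")
      case True then show ?thesis using Gpos by (simp add: wa_def field_simps)
    next
      case False
      then have iJ: "i \<in> J" using i by auto
      have "y' i = (\<Sum>j\<in>J. G i j * w' j) - G i a * (\<Sum>j\<in>J. G a j * w' j) / G a a"
        using w'eq iJ unfolding G'_def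
        by (simp add: algebra_simps sum_subtractf sum_distrib_left sum_divide_distrib)
      then show ?thesis unfolding y'_def wa_def using Gpos by (simp add: field_simps)
    qed
    finally show "(\<Sum>j\<in>insert a J. G i j * w j) = y i" .
  qed
qed

lemma solve_unique:
  fixes G :: "nat \<Rightarrow> nat \<Rightarrow> real"
  assumes "finite J" "c > 0"
    "\<forall>v. (\<Sum>i\<in>J. \<Sum>j\<in>J. v i * G i j * v j) \<ge> c * (\<Sum>i\<in>J. (v i)\<^sup>2)"
    and d0: "\<forall>i\<in>J. (\<Sum>j\<in>J. G i j * d j) = 0"
  shows "\<forall>j\<in>J. d j = 0"
proof -
  have "(\<Sum>i\<in>J. \<Sum>j\<in>J. d i * G i j * d j) = (\<Sum>i\<in>J. d i * (\<Sum>j\<in>J. G i j * d j))"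
    by (simp add: sum_distrib_left mult_ac)
  also have "\<dots> = 0" using d0 by simp
  finally have "c * (\<Sum>i\<in>J. (d i)\<^sup>2) \<le> 0" using assms(3)[rule_format, of d] by linarith
  then have "(\<Sum>i\<in>J. (d i)\<^sup>2) \<le> 0" using assms(2) by (simp add: mult_le_0_iff)
  moreover have "(\<Sum>i\<in>J. (d i)\<^sup>2) \<ge> 0" by (simp add: sum_nonneg)
  ultimately have "(\<Sum>i\<in>J. (d i)\<^sup>2) = 0" by linarith
  then show ?thesis using assms(1) by (simp add: sum_nonneg_eq_0_iff)
qed

lemma cov_eq:
  assumes centered: "\<And>j. (\<integral>x. x j \<partial>P) = 0"
  shows "cov P i j = L2_inner P (coord i) (coord j)"
  unfolding cov_def L2_inner_def coord_def using centered by simp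

lemma core:
  fixes P :: "(nat \<Rightarrow> real) measure" and \<beta> :: "nat \<Rightarrow> real"
  assumes meas: "\<And>j. (\<lambda>x. x j) \<in> borel_measurable P"
    and sq: "\<And>j. integrable P (\<lambda>x. (x j)\<^sup>2)"
    and clam: "clam > 0"
    and pd: "\<forall>v. (\<Sum>i\<in>J. \<Sum>j\<in>J. v i * L2_inner P (coord i) (coord j) * v j) \<ge> clam * (\<Sum>i\<in>J. (v i)\<^sup>2)"
    and J: "J \<subseteq> {1..p}"
  shows "\<exists>b. (\<lambda>x. lin_fun p \<beta> x - L2_proj P J (lin_fun p \<beta>) x) = (\<lambda>x. \<Sum>j=1..p. b j * x j)
          \<and> (\<forall>i\<in>J. (\<Sum>j=1..p. L2_inner P (coord i) (coord j) * b j) = 0)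
          \<and> (\<forall>j\<in>{1..p} - J. b j = \<beta> j)"
proof -
  define G where "G i j = L2_inner P (coord i) (coord j)" for i j
  have Gsym: "G i j = G j i" for i j unfolding G_def L2_inner_def coord_def by (simp add: mult.commute)
  have finJ: "finite J" using J finite_subset by blast
  define f where "f = lin_fun p \<beta>"
  have f_eq: "f = (\<lambda>x. \<Sum>j=1..p. \<beta> j * x j)" unfolding f_def lin_fun_def ..
  have restr: "(\<Sum>j\<in>J. a j * x j) = (\<Sum>j=1..p. (if j \<in> J then a j else 0) * x j)" for a and x :: "nat \<Rightarrow> real"
  proof -
    have "(\<Sum>j\<in>J. a j * x j) = (\<Sum>j\<in>{1..p} \<inter> J. a j * x j)" using J by (simp add: Int_absorb1)
    also have "\<dots> = (\<Sum>j=1..p. if j \<in> J then a j * x j else 0)" by (rule sum.inter_restrict) simp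
    also have "\<dots> = (\<Sum>j=1..p. (if j \<in> J then a j else 0) * x j)" by (rule sum.cong) auto
    finally show ?thesis .
  qed
  have diff: "(\<lambda>x. f x - (\<Sum>j\<in>J. a j * x j)) = (\<lambda>x. \<Sum>j=1..p. (\<beta> j - (if j \<in> J then a j else 0)) * x j)" for a
    unfolding f_eq restr by (simp add: sum_subtractf algebra_simps)
  have orth_iff: "L2_inner P (\<lambda>x. f x - (\<Sum>j\<in>J. a j * x j)) (coord i)
      = (\<Sum>j=1..p. G i j * (\<beta> j - (if j \<in> J then a j else 0)))" for a i
    unfolding diff L2_lin_coord[OF meas sq] G_def using Gsym unfolding G_def by (simp add: mult.commute)
  define y where "y i = (\<Sum>j=1..p. G i j * \<beta> j)" for i
  obtain w where w0: "\<forall>j. j \<notin> J \<longrightarrow> w j = 0" and weq: "\<forall>i\<in>J. (\<Sum>j\<in>J. G i j * w j) = y i"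
    using solve_exists[OF finJ _ clam, of G y] pd Gsym unfolding G_def by blast
  have "\<exists>h. h \<in> lin_span J \<and> (\<forall>j\<in>J. L2_inner P (\<lambda>x. f x - h x) (coord j) = 0)"
  proof (intro exI conjI ballI)
    show "(\<lambda>x. \<Sum>j\<in>J. w j * x j) \<in> lin_span J" unfolding lin_span_def by blast
    fix i assume i: "i \<in> J"
    have "(\<Sum>j=1..p. G i j * (\<beta> j - (if j \<in> J then w j else 0)))
        = y i - (\<Sum>j=1..p. (if j \<in> J then G i j * w j else 0))"
    proof -
      have "(\<Sum>j=1..p. G i j * (\<beta> j - (if j \<in> J then w j else 0)))
          = (\<Sum>j=1..p. G i j * \<beta> j - (if j \<in> J then G i j * w j else 0))"
        by (rule sum.cong) (auto simp: algebra_simps)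
      then show ?thesis unfolding y_def by (simp only: sum_subtractf)
    qed
    also have "(\<Sum>j=1..p. (if j \<in> J then G i j * w j else 0)) = (\<Sum>j\<in>{1..p} \<inter> J. G i j * w j)"
      by (rule sum.inter_restrict[symmetric]) simp
    also have "\<dots> = y i" using J weq i by (simp add: Int_absorb1)
    finally show "L2_inner P (\<lambda>x. f x - (\<Sum>j\<in>J. w j * x j)) (coord i) = 0"
      unfolding orth_iff by simp
  qed
  then have hP: "L2_proj P J f \<in> lin_span J \<and> (\<forall>j\<in>J. L2_inner P (\<lambda>x. f x - L2_proj P J f x) (coord j) = 0)"
    unfolding L2_proj_def by (rule someI_ex)
  then obtain a where ha: "L2_proj P J f = (\<lambda>x. \<Sum>j\<in>J. a j * x j)" unfolding lin_span_def by blast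
  define b where "b j = \<beta> j - (if j \<in> J then a j else 0)" for j
  show ?thesis
  proof (intro exI[of _ b] conjI ballI)
    show "(\<lambda>x. lin_fun p \<beta> x - L2_proj P J (lin_fun p \<beta>) x) = (\<lambda>x. \<Sum>j = 1..p. b j * x j)"
      using diff[of a] ha unfolding f_def b_def by simp
    fix i assume i: "i \<in> J"
    show "(\<Sum>j=1..p. L2_inner P (coord i) (coord j) * b j) = 0"
      using hP i orth_iff[of a i] ha unfolding b_def G_def by simp
  next
    fix j assume "j \<in> {1..p} - J" then show "b j = \<beta> j" unfolding b_def by simp
  qed
qed

lemma dev_bound:
  assumes meas: "\<And>j. (\<lambda>x. x j) \<in> borel_measurable P"
    and sq: "\<And>j. integrable P (\<lambda>x. (x j)\<^sup>2)"
    and r: "r = (\<lambda>x. \<Sum>j=1..p. b j * x j)"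
  shows "\<bar>emp_inner n X r r - L2_inner P r r\<bar> \<le> D_n n p X P * (\<Sum>j=1..p. \<bar>b j\<bar>)\<^sup>2"
proof -
  define E where "E j k = emp_inner n X (coord j) (coord k) - L2_inner P (coord j) (coord k)" for j k
  define D where "D = D_n n p X P"
  have ED: "\<bar>E j k\<bar> \<le> D" if "j \<in> {1..p}" "k \<in> {1..p}" for j k
    unfolding D_def D_n_def E_def
    by (rule Max_ge) (use that in auto)
  have "emp_inner n X r r - L2_inner P r r = (\<Sum>j=1..p. \<Sum>k=1..p. b j * b k * E j k)"
    unfolding r emp_bilin L2_bilin[OF meas sq] E_def
    by (simp add: sum_subtractf algebra_simps)
  also have "\<bar>\<dots>\<bar> \<le> (\<Sum>j=1..p. \<Sum>k=1..p. \<bar>b j * b k * E j k\<bar>)"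
    by (rule order_trans[OF sum_abs sum_mono]) (rule sum_abs)
  also have "\<dots> \<le> (\<Sum>j=1..p. \<Sum>k=1..p. \<bar>b j\<bar> * \<bar>b k\<bar> * D)"
    by (intro sum_mono) (auto simp: abs_mult intro!: mult_left_mono ED)
  also have "\<dots> = D * (\<Sum>j=1..p. \<bar>b j\<bar>)\<^sup>2"
    by (simp add: power2_eq_square sum_product sum_distrib_left mult_ac)
  finally show ?thesis unfolding D_def .
qed

lemma L_bound:
  assumes meas: "\<And>j. (\<lambda>x. x j) \<in> borel_measurable P"
    and sq: "\<And>j. integrable P (\<lambda>x. (x j)\<^sup>2)"
    and r: "r = (\<lambda>x. \<Sum>j=1..p. b j * x j)"
    and pd: "\<forall>v. (\<Sum>i=1..p. \<Sum>j=1..p. v i * L2_inner P (coord i) (coord j) * v j) \<ge> clam * (\<Sum>i=1..p. (v i)\<^sup>2)"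
  shows "L2_inner P r r \<ge> clam * (\<Sum>i=1..p. (b i)\<^sup>2)"
proof -
  have "L2_inner P r r = (\<Sum>i=1..p. \<Sum>j=1..p. b i * L2_inner P (coord i) (coord j) * b j)"
    unfolding r L2_bilin[OF meas sq] by (simp add: mult_ac)
  then show ?thesis using pd[rule_format, of b] by simp
qed

lemma case_i_bound:
  fixes b \<beta> :: "nat \<Rightarrow> real"
  assumes s: "card {j\<in>{1..p}. \<beta> j \<noteq> 0} \<le> s" and J: "J \<subseteq> {1..p}"
    and bK: "\<forall>j\<in>{1..p} - J. b j = \<beta> j"
  shows "(\<Sum>j=1..p. \<bar>b j\<bar>)\<^sup>2 \<le> real (s + card J) * (\<Sum>j=1..p. (b j)\<^sup>2)"
proof -
  define T where "T = {j\<in>{1..p}. b j \<noteq> 0}"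
  have Tsub: "T \<subseteq> {1..p}" unfolding T_def by auto
  have finT: "finite T" using Tsub finite_subset by blast
  have e: "(\<Sum>j=1..p. \<bar>b j\<bar>) = (\<Sum>j\<in>T. \<bar>b j\<bar>)"
    by (rule sum.mono_neutral_right) (auto simp: T_def)
  have "T \<subseteq> J \<union> {j\<in>{1..p}. \<beta> j \<noteq> 0}" using bK unfolding T_def by auto
  then have "card T \<le> card (J \<union> {j\<in>{1..p}. \<beta> j \<noteq> 0})"
    by (intro card_mono) (use J finite_subset in auto)
  also have "\<dots> \<le> card J + card {j\<in>{1..p}. \<beta> j \<noteq> 0}" by (rule card_Un_le)
  finally have cT: "card T \<le> s + card J" using s by linarith
  have "(\<Sum>j\<in>T. \<bar>b j\<bar>)\<^sup>2 \<le> (\<Sum>j\<in>T. (\<bar>b j\<bar>)\<^sup>2) * card T" by (rule sum_squared_le_sum_of_squares)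
  also have "\<dots> = (\<Sum>j\<in>T. (b j)\<^sup>2) * card T" by simp
  also have "\<dots> \<le> (\<Sum>j=1..p. (b j)\<^sup>2) * card T"
    by (intro mult_right_mono sum_mono2[OF finite_atLeastAtMost Tsub]) auto
  also have "\<dots> \<le> (\<Sum>j=1..p. (b j)\<^sup>2) * real (s + card J)"
    by (intro mult_left_mono) (use cT in \<open>auto intro: sum_nonneg\<close>)
  finally show ?thesis unfolding e by (simp add: mult.commute)
qed

lemma sub_inv_prop:
  fixes G :: "nat \<Rightarrow> nat \<Rightarrow> real"
  assumes finJ: "finite J" and sym: "\<forall>i\<in>J. \<forall>j\<in>J. G i j = G j i" and c: "c > 0"
    and pd: "\<forall>v. (\<Sum>i\<in>J. \<Sum>j\<in>J. v i * G i j * v j) \<ge> c * (\<Sum>i\<in>J. (v i)\<^sup>2)"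
  shows "(\<forall>j. j \<notin> J \<longrightarrow> sub_inv_apply G J k j = 0) \<and>
      (\<forall>i\<in>J. (\<Sum>j\<in>J. G i j * sub_inv_apply G J k j) = G i k)"
proof -
  let ?Q = "\<lambda>w. (\<forall>j. j \<notin> J \<longrightarrow> w j = 0) \<and> (\<forall>i\<in>J. (\<Sum>j\<in>J. G i j * w j) = G i k)"
  obtain w where w: "?Q w" using solve_exists[OF finJ sym c pd, of "\<lambda>i. G i k"] by blast
  have uq: "w' = w" if "?Q w'" for w'
  proof
    fix j
    have "\<forall>i\<in>J. (\<Sum>j\<in>J. G i j * (w' j - w j)) = 0"
    proof
      fix i assume i: "i \<in> J"
      have "(\<Sum>j\<in>J. G i j * (w' j - w j)) = (\<Sum>j\<in>J. G i j * w' j) - (\<Sum>j\<in>J. G i j * w j)"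
        by (simp add: right_diff_distrib sum_subtractf)
      also have "\<dots> = 0" using conjunct2[OF w] conjunct2[OF that] i by simp
      finally show "(\<Sum>j\<in>J. G i j * (w' j - w j)) = 0" .
    qed
    then have "\<forall>j\<in>J. w' j - w j = 0" using solve_unique[OF finJ c pd, of "\<lambda>j. w' j - w j"] by blast
    then show "w' j = w j" using conjunct1[OF w] conjunct1[OF that] by (cases "j \<in> J") simp_all
  qed
  have "?Q (THE w. ?Q w)" by (rule theI[of ?Q w, OF w uq])
  then show ?thesis unfolding sub_inv_apply_def .
qed

lemma case_ii_bound:
  fixes b \<beta> :: "nat \<Rightarrow> real" and G :: "nat \<Rightarrow> nat \<Rightarrow> real"
  assumes J: "J \<subseteq> {1..p}"
    and sym: "\<forall>i j. G i j = G j i" and c: "c > 0"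
    and pd: "\<forall>v. (\<Sum>i\<in>J. \<Sum>j\<in>J. v i * G i j * v j) \<ge> c * (\<Sum>i\<in>J. (v i)\<^sup>2)"
    and orth: "\<forall>i\<in>J. (\<Sum>j=1..p. G i j * b j) = 0"
    and bK: "\<forall>j\<in>{1..p} - J. b j = \<beta> j"
    and winv: "\<forall>k\<in>{1..p} - J. (\<Sum>j\<in>J. \<bar>sub_inv_apply G J k j\<bar>) < CCov"
  shows "(\<Sum>j=1..p. \<bar>b j\<bar>) \<le> (1 + \<bar>CCov\<bar>) * (\<Sum>k\<in>{1..p} - J. \<bar>\<beta> k\<bar>)"
proof -
  define K where "K = {1..p} - J"
  have finJ: "finite J" using J finite_subset by blast
  have finK: "finite K" unfolding K_def by simp
  define W where "W k = sub_inv_apply G J k" for k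
  have Wp: "\<forall>i\<in>J. (\<Sum>j\<in>J. G i j * W k j) = G i k" for k
  proof -
    have "\<forall>i\<in>J. \<forall>j\<in>J. G i j = G j i" using sym by simp
    from sub_inv_prop[OF finJ this c pd, of k] show ?thesis unfolding W_def by (rule conjunct2)
  qed
  define u where "u j = b j + (\<Sum>k\<in>K. \<beta> k * W k j)" for j
  have split: "(\<Sum>j=1..p. f j) = (\<Sum>j\<in>K. f j) + (\<Sum>j\<in>J. f j)" for f :: "nat \<Rightarrow> real"
    unfolding K_def using J by (intro sum.subset_diff) auto
  have "\<forall>i\<in>J. (\<Sum>j\<in>J. G i j * u j) = 0"
  proof
    fix i assume i: "i \<in> J"
    have "(\<Sum>j\<in>J. G i j * u j) = (\<Sum>j\<in>J. G i j * b j) + (\<Sum>k\<in>K. \<beta> k * (\<Sum>j\<in>J. G i j * W k j))"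
      unfolding u_def by (simp add: algebra_simps sum.distrib sum_distrib_left sum.swap[of _ J K])
    also have "(\<Sum>k\<in>K. \<beta> k * (\<Sum>j\<in>J. G i j * W k j)) = (\<Sum>k\<in>K. G i k * b k)"
      using Wp i bK unfolding K_def by (intro sum.cong) auto
    also have "(\<Sum>j\<in>J. G i j * b j) + (\<Sum>k\<in>K. G i k * b k) = (\<Sum>j=1..p. G i j * b j)"
      unfolding split by simp
    finally show "(\<Sum>j\<in>J. G i j * u j) = 0" using orth i by simp
  qed
  then have u0: "\<forall>j\<in>J. u j = 0" by (rule solve_unique[OF finJ c pd])
  have "(\<Sum>j\<in>J. \<bar>b j\<bar>) \<le> (\<Sum>j\<in>J. \<Sum>k\<in>K. \<bar>\<beta> k\<bar> * \<bar>W k j\<bar>)"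
  proof (rule sum_mono)
    fix j assume j: "j \<in> J"
    then have "b j = - (\<Sum>k\<in>K. \<beta> k * W k j)" using u0 unfolding u_def by (simp add: eq_neg_iff_add_eq_0)
    then have "\<bar>b j\<bar> = \<bar>\<Sum>k\<in>K. \<beta> k * W k j\<bar>" by simp
    also have "\<dots> \<le> (\<Sum>k\<in>K. \<bar>\<beta> k * W k j\<bar>)" by (rule sum_abs)
    finally show "\<bar>b j\<bar> \<le> (\<Sum>k\<in>K. \<bar>\<beta> k\<bar> * \<bar>W k j\<bar>)" by (simp add: abs_mult)
  qed
  also have "\<dots> = (\<Sum>k\<in>K. \<bar>\<beta> k\<bar> * (\<Sum>j\<in>J. \<bar>W k j\<bar>))"
    by (simp add: sum_distrib_left sum.swap[of _ J K])
  also have "\<dots> \<le> (\<Sum>k\<in>K. \<bar>\<beta> k\<bar> * \<bar>CCov\<bar>)"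
  proof (rule sum_mono)
    fix k assume "k \<in> K"
    then have "(\<Sum>j\<in>J. \<bar>W k j\<bar>) \<le> \<bar>CCov\<bar>" using winv unfolding K_def W_def by force
    then show "\<bar>\<beta> k\<bar> * (\<Sum>j\<in>J. \<bar>W k j\<bar>) \<le> \<bar>\<beta> k\<bar> * \<bar>CCov\<bar>" by (simp add: mult_left_mono)
  qed
  also have "\<dots> = \<bar>CCov\<bar> * (\<Sum>k\<in>K. \<bar>\<beta> k\<bar>)" by (simp add: sum_distrib_left mult.commute)
  finally have bJ: "(\<Sum>j\<in>J. \<bar>b j\<bar>) \<le> \<bar>CCov\<bar> * (\<Sum>k\<in>K. \<bar>\<beta> k\<bar>)" .
  have bK': "(\<Sum>j\<in>K. \<bar>b j\<bar>) = (\<Sum>k\<in>K. \<bar>\<beta> k\<bar>)" using bK unfolding K_def by simp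
  show ?thesis unfolding split[of "\<lambda>j. \<bar>b j\<bar>"] bK' using bJ unfolding K_def by (simp add: algebra_simps)
qed

lemma restrict_sum:
  assumes "finite A" "J \<subseteq> A"
  shows "(\<Sum>i\<in>A. if i \<in> J then f i else (0::real)) = (\<Sum>i\<in>J. f i)"
proof -
  have "(\<Sum>i\<in>A. if i \<in> J then f i else 0) = (\<Sum>i\<in>A \<inter> J. f i)"
    by (rule sum.inter_restrict[symmetric]) (rule assms(1))
  then show ?thesis using assms(2) by (simp add: Int_absorb1)
qed

lemma pd_restrict:
  fixes G :: "nat \<Rightarrow> nat \<Rightarrow> real"
  assumes "finite A" "J \<subseteq> A"
    and pd: "\<forall>v. (\<Sum>i\<in>A. \<Sum>j\<in>A. v i * G i j * v j) \<ge> c * (\<Sum>i\<in>A. (v i)\<^sup>2)"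
  shows "\<forall>v. (\<Sum>i\<in>J. \<Sum>j\<in>J. v i * G i j * v j) \<ge> c * (\<Sum>i\<in>J. (v i)\<^sup>2)"
proof
  fix v :: "nat \<Rightarrow> real"
  define v' where "v' i = (if i \<in> J then v i else 0)" for i
  have e1: "(\<Sum>i\<in>A. \<Sum>j\<in>A. v' i * G i j * v' j) = (\<Sum>i\<in>J. \<Sum>j\<in>J. v i * G i j * v j)"
  proof -
    have "(\<Sum>i\<in>A. \<Sum>j\<in>A. v' i * G i j * v' j)
        = (\<Sum>i\<in>A. if i \<in> J then (\<Sum>j\<in>A. if j \<in> J then v i * G i j * v j else 0) else 0)"
      by (intro sum.cong refl) (auto simp: v'_def intro!: sum.cong)
    also have "\<dots> = (\<Sum>i\<in>A. if i \<in> J then (\<Sum>j\<in>J. v i * G i j * v j) else 0)"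
      using restrict_sum[OF assms(1,2)] by simp
    also have "\<dots> = (\<Sum>i\<in>J. \<Sum>j\<in>J. v i * G i j * v j)" by (rule restrict_sum[OF assms(1,2)])
    finally show ?thesis .
  qed
  have e2: "(\<Sum>i\<in>A. (v' i)\<^sup>2) = (\<Sum>i\<in>J. (v i)\<^sup>2)"
  proof -
    have "(\<Sum>i\<in>A. (v' i)\<^sup>2) = (\<Sum>i\<in>A. if i \<in> J then (v i)\<^sup>2 else 0)"
      by (intro sum.cong refl) (auto simp: v'_def)
    then show ?thesis using restrict_sum[OF assms(1,2)] by simp
  qed
  show "(\<Sum>i\<in>J. \<Sum>j\<in>J. v i * G i j * v j) \<ge> c * (\<Sum>i\<in>J. (v i)\<^sup>2)"
    using pd[rule_format, of v'] unfolding e1 e2 .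
qed

lemma powr_sq: "x \<ge> 0 \<Longrightarrow> (x powr e)\<^sup>2 = x powr (2 * e)" for x e :: real
  by (cases "x = 0") (simp_all add: powr_power)

theorem proposition2p6:
  fixes P :: "nat \<Rightarrow> (nat \<Rightarrow> real) measure"
    and X :: "nat \<Rightarrow> nat \<Rightarrow> (nat \<Rightarrow> real)"
    and p :: "nat \<Rightarrow> nat"
    and \<beta> :: "nat \<Rightarrow> nat \<Rightarrow> real"
    and s :: "nat \<Rightarrow> nat"
    and Cf \<beta>low \<gamma> Cl2 C\<gamma> clam CCov sigma2 rho2 :: real
  assumes prob: "\<And>n. prob_space (P n)"
    and meas: "\<And>n j. (\<lambda>x. x j) \<in> borel_measurable (P n)"
    and sq_int: "\<And>n j. integrable (P n) (\<lambda>x. (x j)\<^sup>2)"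
    and centered: "\<And>n j. (\<integral>x. x j \<partial>P n) = 0"
    and p_inf: "filterlim p at_top sequentially"
    and logp: "(\<lambda>n. ln (real (p n)) / real n) \<longlonglongrightarrow> 0"
    and sigma2_pos: "sigma2 > 0" and rho2_pos: "rho2 > 0"
    and A2: "A2_i P p \<beta> s Cf \<beta>low \<or> A2_ii p \<beta> \<gamma> Cl2 C\<gamma>"
    and A4: "A4 P p clam CCov sigma2 rho2"
  shows "\<exists>C>0. \<forall>\<^sub>F n in sequentially. \<forall>J. J \<subseteq> {1..p n} \<and> real (card J) \<le> M_n n (p n) sigma2 rho2 \<longrightarrow>
     (let f = lin_fun (p n) (\<beta> n);
          r = (\<lambda>x. f x - L2_proj (P n) J f x);
          dev = \<bar>emp_inner n (X n) r r - L2_inner (P n) r r\<bar>;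
          D = D_n n (p n) (X n) (P n)
      in (A2_i P p \<beta> s Cf \<beta>low \<longrightarrow>
            dev \<le> C * D * (real (s n + card J) * L2_inner (P n) r r)) \<and>
         (A2_ii p \<beta> \<gamma> Cl2 C\<gamma> \<longrightarrow>
            dev \<le> C * D * (L2_inner (P n) r r) powr ((2 * \<gamma> - 2) / (2 * \<gamma> - 1))))"
proof -
  have clam: "clam > 0"
    and pdAll: "\<And>n. \<forall>v. (\<Sum>i=1..p n. \<Sum>j=1..p n. v i * cov (P n) i j * v j) \<ge> clam * (\<Sum>i=1..p n. (v i)\<^sup>2)"
    and invAll: "\<And>n J. J \<subseteq> {1..p n} \<Longrightarrow> real (card J) \<le> M_n n (p n) sigma2 rho2 \<Longrightarrow>
        (\<forall>k\<in>{1..p n} - J. (\<Sum>j\<in>J. \<bar>sub_inv_apply (cov (P n)) J k j\<bar>) < CCov)"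
    using A4 unfolding A4_def by blast+
  have covL: "\<And>n i j. cov (P n) i j = L2_inner (P n) (coord i) (coord j)"
    by (rule cov_eq[OF centered])
  have covsym: "\<And>n. \<forall>i j. cov (P n) i j = cov (P n) j i"
    unfolding cov_def by (simp add: mult.commute)
  define e where "e = (\<gamma> - 1) / (2 * \<gamma> - 1)"
  define K2 where "K2 = (1 + \<bar>CCov\<bar>)\<^sup>2 * C\<gamma>\<^sup>2 / clam powr (2 * e)"
  define C where "C = 1 / clam + K2"
  have K2: "K2 \<ge> 0" unfolding K2_def by simp
  have Cpos: "C > 0" unfolding C_def using clam K2 by (smt (verit) divide_pos_pos)
  have ev: "\<forall>\<^sub>F n in sequentially. p n \<ge> 1"
    using p_inf unfolding filterlim_at_top by blast
  show ?thesis
  proof (intro exI[of _ C] conjI Cpos eventually_mono[OF ev] allI impI)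
    fix n J assume pn: "1 \<le> p n" and HJ: "J \<subseteq> {1..p n} \<and> real (card J) \<le> M_n n (p n) sigma2 rho2"
    then have J: "J \<subseteq> {1..p n}" and cJ: "real (card J) \<le> M_n n (p n) sigma2 rho2" by auto
    have pdL: "\<forall>v. (\<Sum>i=1..p n. \<Sum>j=1..p n. v i * L2_inner (P n) (coord i) (coord j) * v j) \<ge> clam * (\<Sum>i=1..p n. (v i)\<^sup>2)"
      using pdAll[of n] unfolding covL .
    have pdJ: "\<forall>v. (\<Sum>i\<in>J. \<Sum>j\<in>J. v i * L2_inner (P n) (coord i) (coord j) * v j) \<ge> clam * (\<Sum>i\<in>J. (v i)\<^sup>2)"
      by (rule pd_restrict[OF finite_atLeastAtMost J pdL])
    have pdJc: "\<forall>v. (\<Sum>i\<in>J. \<Sum>j\<in>J. v i * cov (P n) i j * v j) \<ge> clam * (\<Sum>i\<in>J. (v i)\<^sup>2)"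
      using pdJ unfolding covL .
    obtain b where rb: "(\<lambda>x. lin_fun (p n) (\<beta> n) x - L2_proj (P n) J (lin_fun (p n) (\<beta> n)) x) = (\<lambda>x. \<Sum>j=1..p n. b j * x j)"
      and orth: "\<forall>i\<in>J. (\<Sum>j=1..p n. L2_inner (P n) (coord i) (coord j) * b j) = 0"
      and bK: "\<forall>j\<in>{1..p n} - J. b j = \<beta> n j"
      using core[OF meas sq_int clam pdJ J, of "\<beta> n"] by blast
    define r where "r = (\<lambda>x. lin_fun (p n) (\<beta> n) x - L2_proj (P n) J (lin_fun (p n) (\<beta> n)) x)"
    define dev where "dev = \<bar>emp_inner n (X n) r r - L2_inner (P n) r r\<bar>"
    define D where "D = D_n n (p n) (X n) (P n)"
    define L where "L = L2_inner (P n) r r"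
    define B where "B = (\<Sum>j=1..p n. \<bar>b j\<bar>)"
    have dev: "dev \<le> D * B\<^sup>2" unfolding dev_def D_def B_def
      by (rule dev_bound[OF meas sq_int]) (simp add: r_def rb)
    have Lge: "L \<ge> clam * (\<Sum>i=1..p n. (b i)\<^sup>2)" unfolding L_def
      by (rule L_bound[OF meas sq_int _ pdL]) (simp add: r_def rb)
    have sb: "(\<Sum>i=1..p n. (b i)\<^sup>2) \<le> L / clam" using Lge clam by (simp add: field_simps)
    have Lnn: "L \<ge> 0" using Lge clam by (smt (verit) sum_nonneg zero_le_power2 mult_nonneg_nonneg)
    have Dnn: "D \<ge> 0"
    proof -
      have "\<bar>emp_inner n (X n) (coord 1) (coord 1) - L2_inner (P n) (coord 1) (coord 1)\<bar> \<le> D"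
        unfolding D_def D_n_def by (rule Max_ge) (use pn in auto)
      then show ?thesis by linarith
    qed
    have Bnn: "B \<ge> 0" unfolding B_def by (simp add: sum_nonneg)
    have part1: "A2_i P p \<beta> s Cf \<beta>low \<longrightarrow> dev \<le> C * D * (real (s n + card J) * L)"
    proof
      assume A: "A2_i P p \<beta> s Cf \<beta>low"
      then have sn: "card {j\<in>{1..p n}. \<beta> n j \<noteq> 0} \<le> s n" unfolding A2_i_def by blast
      have "B\<^sup>2 \<le> real (s n + card J) * (\<Sum>j=1..p n. (b j)\<^sup>2)"
        unfolding B_def by (rule case_i_bound[OF sn J bK])
      also have "\<dots> \<le> real (s n + card J) * (L / clam)" by (intro mult_left_mono sb) simp
      finally have "D * B\<^sup>2 \<le> D * (real (s n + card J) * (L / clam))" by (intro mult_left_mono Dnn)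
      also have "\<dots> = (1 / clam) * D * (real (s n + card J) * L)" by simp
      also have "\<dots> \<le> C * D * (real (s n + card J) * L)"
        using K2 Dnn Lnn by (intro mult_right_mono mult_nonneg_nonneg) (simp_all add: C_def)
      finally show "dev \<le> C * D * (real (s n + card J) * L)" using dev by linarith
    qed
    have part2: "A2_ii p \<beta> \<gamma> Cl2 C\<gamma> \<longrightarrow> dev \<le> C * D * L powr ((2 * \<gamma> - 2) / (2 * \<gamma> - 1))"
    proof
      assume A: "A2_ii p \<beta> \<gamma> Cl2 C\<gamma>"
      then have g1: "\<gamma> \<ge> 1" and Cg: "\<And>K. K \<subseteq> {1..p n} \<Longrightarrow>
          (\<Sum>j\<in>K. \<bar>\<beta> n j\<bar>) \<le> C\<gamma> * (\<Sum>j\<in>K. (\<beta> n j)\<^sup>2) powr ((\<gamma> - 1) / (2 * \<gamma> - 1))"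
        unfolding A2_ii_def by blast+
      have e0: "e \<ge> 0" unfolding e_def using g1 by simp
      have e2: "2 * e = (2 * \<gamma> - 2) / (2 * \<gamma> - 1)" unfolding e_def using g1 by (simp add: field_simps)
      define K where "K = {1..p n} - J"
      have orthc: "\<forall>i\<in>J. (\<Sum>j=1..p n. cov (P n) i j * b j) = 0" using orth unfolding covL .
      have B1: "B \<le> (1 + \<bar>CCov\<bar>) * (\<Sum>k\<in>K. \<bar>\<beta> n k\<bar>)" unfolding B_def K_def
        by (rule case_ii_bound[OF J covsym clam pdJc orthc bK invAll[OF J cJ]])
      define S where "S = (\<Sum>k\<in>K. (\<beta> n k)\<^sup>2)"
      have Snn: "S \<ge> 0" unfolding S_def by (simp add: sum_nonneg)
      have "S = (\<Sum>k\<in>K. (b k)\<^sup>2)" unfolding S_def K_def using bK by simp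
      also have "\<dots> \<le> (\<Sum>k=1..p n. (b k)\<^sup>2)" unfolding K_def by (intro sum_mono2) auto
      finally have SL: "S \<le> L / clam" using sb by linarith
      have "(\<Sum>k\<in>K. \<bar>\<beta> n k\<bar>) \<le> C\<gamma> * S powr e" unfolding S_def e_def by (rule Cg) (simp add: K_def)
      also have "\<dots> \<le> \<bar>C\<gamma>\<bar> * S powr e" by (intro mult_right_mono) auto
      also have "\<dots> \<le> \<bar>C\<gamma>\<bar> * (L / clam) powr e" by (intro mult_left_mono powr_mono2 e0 Snn SL) auto
      finally have "B \<le> (1 + \<bar>CCov\<bar>) * (\<bar>C\<gamma>\<bar> * (L / clam) powr e)"
        using B1 by (smt (verit) abs_ge_zero mult_left_mono)
      then have "B\<^sup>2 \<le> ((1 + \<bar>CCov\<bar>) * (\<bar>C\<gamma>\<bar> * (L / clam) powr e))\<^sup>2"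
        using Bnn by (rule power_mono)
      also have "\<dots> = (1 + \<bar>CCov\<bar>)\<^sup>2 * C\<gamma>\<^sup>2 * ((L / clam) powr e)\<^sup>2"
        by (simp add: power_mult_distrib)
      also have "((L / clam) powr e)\<^sup>2 = L powr (2 * e) / clam powr (2 * e)"
        using Lnn clam by (simp add: powr_divide power_divide powr_sq)
      finally have "B\<^sup>2 \<le> K2 * L powr (2 * e)" unfolding K2_def by simp
      then have "D * B\<^sup>2 \<le> D * (K2 * L powr (2 * e))" by (intro mult_left_mono Dnn)
      also have "\<dots> \<le> C * D * L powr (2 * e)"
      proof -
        have "K2 \<le> C" unfolding C_def using clam by simp
        then have "K2 * (D * L powr (2 * e)) \<le> C * (D * L powr (2 * e))"
          using Dnn by (intro mult_right_mono) simp_all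
        then show ?thesis by (simp add: mult_ac)
      qed
      finally show "dev \<le> C * D * L powr ((2 * \<gamma> - 2) / (2 * \<gamma> - 1))" using dev e2 by simp
    qed
    show "let f = lin_fun (p n) (\<beta> n);
          r = (\<lambda>x. f x - L2_proj (P n) J f x);
          dev = \<bar>emp_inner n (X n) r r - L2_inner (P n) r r\<bar>;
          D = D_n n (p n) (X n) (P n)
      in (A2_i P p \<beta> s Cf \<beta>low \<longrightarrow>
            dev \<le> C * D * (real (s n + card J) * L2_inner (P n) r r)) \<and>
         (A2_ii p \<beta> \<gamma> Cl2 C\<gamma> \<longrightarrow>
            dev \<le> C * D * (L2_inner (P n) r r) powr ((2 * \<gamma> - 2) / (2 * \<gamma> - 1)))"
      using part1 part2 unfolding Let_def r_def dev_def D_def L_def by simp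
  qed
qed

end
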